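(* ($\mathrm{ZFCU}_R$) (1) There is a set of urelements $A$ over which homogeneity holds. (2) If $A\subseteq A'$ are sets of urelements and homogeneity holds over $A$, then homogeneity holds over $A'$. (3) Every set of urelements $A$ is a subset of some set of urelements $A'$ over which homogeneity holds.
   Context: Urelement set theory in the language $\{\in,\mathcal{A}\}$ with $\mathcal{A}(x)$ meaning $x$ is a urelement (urelements have no members). $\mathrm{ZFCU}_R$ is ZFC with urelements: Extensionality for sets, Foundation, Pairing, Union, Powerset, Separation, Infinity, Replacement (not Collection) and AC. The kernel $ker(x)$ is the set of urelements in the transitive closure of $\{x\}$. Any permutation of a set of urelements extends (as the identity on other urelements, and by $\pi x=\{\pi y: y\in x\}$ on sets) to an $\in$-automorphism of the universe. Homogeneity holds over a set of urelements $A$ if whenever $B,C$ are sets of urelements with $B\cup C$ disjoint from $A$ and $B$ equinumerous with $C$, there is such an automorphism $\pi$ with $\pi B=C$ that fixes every element of $A$. *)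

theory Defs
  imports Main
begin

datatype fm =
    FMem nat nat
  | FUr nat
  | FEq nat nat
  | FNeg fm
  | FConj fm fm
  | FEx nat fm

text \<open>A structure is a universe (the type 'a) with a membership relation mem
  (mem x y means x \<in> y) and a urelement predicate ur.\<close>

primrec sat :: "('a \<Rightarrow> 'a \<Rightarrow> bool) \<Rightarrow> ('a \<Rightarrow> bool) \<Rightarrow> (nat \<Rightarrow> 'a) \<Rightarrow> fm \<Rightarrow> bool" where
  "sat mem ur e (FMem i j) = mem (e i) (e j)"
| "sat mem ur e (FUr i) = ur (e i)"
| "sat mem ur e (FEq i j) = (e i = e j)"
| "sat mem ur e (FNeg \<phi>) = (\<not> sat mem ur e \<phi>)"
| "sat mem ur e (FConj \<phi> \<psi>) = (sat mem ur e \<phi> \<and> sat mem ur e \<psi>)"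
| "sat mem ur e (FEx i \<phi>) = (\<exists>a. sat mem ur (e(i := a)) \<phi>)"

definition upair_in :: "('a \<Rightarrow> 'a \<Rightarrow> bool) \<Rightarrow> ('a \<Rightarrow> bool) \<Rightarrow> 'a \<Rightarrow> 'a \<Rightarrow> 'a \<Rightarrow> bool" where
  "upair_in mem ur x y z \<longleftrightarrow> \<not> ur z \<and> (\<forall>w. mem w z \<longleftrightarrow> w = x \<or> w = y)"

definition opair_in :: "('a \<Rightarrow> 'a \<Rightarrow> bool) \<Rightarrow> ('a \<Rightarrow> bool) \<Rightarrow> 'a \<Rightarrow> 'a \<Rightarrow> 'a \<Rightarrow> bool" where
  "opair_in mem ur x y p \<longleftrightarrow>
     (\<exists>s t. upair_in mem ur x x s \<and> upair_in mem ur x y t \<and> upair_in mem ur s t p)"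

definition rel_in :: "('a \<Rightarrow> 'a \<Rightarrow> bool) \<Rightarrow> ('a \<Rightarrow> bool) \<Rightarrow> 'a \<Rightarrow> 'a \<Rightarrow> 'a \<Rightarrow> bool" where
  "rel_in mem ur r x y \<longleftrightarrow> (\<exists>p. mem p r \<and> opair_in mem ur x y p)"

definition wellorders_in :: "('a \<Rightarrow> 'a \<Rightarrow> bool) \<Rightarrow> ('a \<Rightarrow> bool) \<Rightarrow> 'a \<Rightarrow> 'a \<Rightarrow> bool" where
  "wellorders_in mem ur r x \<longleftrightarrow>
     (\<forall>u. mem u x \<longrightarrow> \<not> rel_in mem ur r u u) \<and>
     (\<forall>u v w. mem u x \<and> mem v x \<and> mem w x \<and> rel_in mem ur r u v \<and> rel_in mem ur r v w
        \<longrightarrow> rel_in mem ur r u w) \<and>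
     (\<forall>u v. mem u x \<and> mem v x \<longrightarrow> rel_in mem ur r u v \<or> u = v \<or> rel_in mem ur r v u) \<and>
     (\<forall>s. (\<forall>u. mem u s \<longrightarrow> mem u x) \<and> (\<exists>u. mem u s) \<longrightarrow>
        (\<exists>m. mem m s \<and> (\<forall>u. mem u s \<longrightarrow> \<not> rel_in mem ur r u m)))"

definition bij_in :: "('a \<Rightarrow> 'a \<Rightarrow> bool) \<Rightarrow> ('a \<Rightarrow> bool) \<Rightarrow> 'a \<Rightarrow> 'a \<Rightarrow> 'a \<Rightarrow> bool" where
  "bij_in mem ur f B C \<longleftrightarrow>
     (\<forall>p. mem p f \<longrightarrow> (\<exists>u v. opair_in mem ur u v p \<and> mem u B \<and> mem v C)) \<and>
     (\<forall>u. mem u B \<longrightarrow> (\<exists>!v. rel_in mem ur f u v)) \<and>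
     (\<forall>v. mem v C \<longrightarrow> (\<exists>!u. rel_in mem ur f u v))"

definition equinum_in :: "('a \<Rightarrow> 'a \<Rightarrow> bool) \<Rightarrow> ('a \<Rightarrow> bool) \<Rightarrow> 'a \<Rightarrow> 'a \<Rightarrow> bool" where
  "equinum_in mem ur B C \<longleftrightarrow> (\<exists>f. bij_in mem ur f B C)"

definition urset_in :: "('a \<Rightarrow> 'a \<Rightarrow> bool) \<Rightarrow> ('a \<Rightarrow> bool) \<Rightarrow> 'a \<Rightarrow> bool" where
  "urset_in mem ur x \<longleftrightarrow> \<not> ur x \<and> (\<forall>y. mem y x \<longrightarrow> ur y)"

text \<open>The action on urelements of the automorphism induced by a permutation p of the
  set of urelements D (identity on urelements outside D): a is sent to b.\<close>
definition act_in :: "('a \<Rightarrow> 'a \<Rightarrow> bool) \<Rightarrow> ('a \<Rightarrow> bool) \<Rightarrow> 'a \<Rightarrow> 'a \<Rightarrow> 'a \<Rightarrow> 'a \<Rightarrow> bool" where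
  "act_in mem ur p D a b \<longleftrightarrow> (mem a D \<and> rel_in mem ur p a b) \<or> (\<not> mem a D \<and> b = a)"

text \<open>Homogeneity over the set of urelements A: whenever B, C are equinumerous sets of
  urelements with B \<union> C disjoint from A, there is an automorphism \<pi> induced by a permutation
  p of a set of urelements D with \<pi> B = C fixing every element of A.  Since B, C, A consist
  of urelements, \<pi> B = {\<pi> b : b \<in> B} and \<pi> fixes a iff \<pi> a = a.\<close>
definition homogeneous_over :: "('a \<Rightarrow> 'a \<Rightarrow> bool) \<Rightarrow> ('a \<Rightarrow> bool) \<Rightarrow> 'a \<Rightarrow> bool" where
  "homogeneous_over mem ur A \<longleftrightarrow>
     (\<forall>B C. urset_in mem ur B \<and> urset_in mem ur C \<and>
        (\<forall>u. (mem u B \<or> mem u C) \<longrightarrow> \<not> mem u A) \<and> equinum_in mem ur B C \<longrightarrow>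
        (\<exists>D p. urset_in mem ur D \<and> bij_in mem ur p D D \<and>
           (\<forall>a. mem a A \<longrightarrow> act_in mem ur p D a a) \<and>
           (\<forall>c. mem c C \<longleftrightarrow> (\<exists>b. mem b B \<and> act_in mem ur p D b c))))"

definition ZFCU_R :: "('a \<Rightarrow> 'a \<Rightarrow> bool) \<Rightarrow> ('a \<Rightarrow> bool) \<Rightarrow> bool" where
  "ZFCU_R mem ur \<longleftrightarrow>
    \<comment> \<open>urelements have no members\<close>
    (\<forall>x y. ur x \<longrightarrow> \<not> mem y x) \<and>
    \<comment> \<open>Extensionality for sets\<close>
    (\<forall>x y. \<not> ur x \<and> \<not> ur y \<and> (\<forall>z. mem z x \<longleftrightarrow> mem z y) \<longrightarrow> x = y) \<and>
    \<comment> \<open>Foundation\<close>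
    (\<forall>x. (\<exists>y. mem y x) \<longrightarrow> (\<exists>y. mem y x \<and> \<not> (\<exists>z. mem z x \<and> mem z y))) \<and>
    \<comment> \<open>Pairing\<close>
    (\<forall>x y. \<exists>z. upair_in mem ur x y z) \<and>
    \<comment> \<open>Union\<close>
    (\<forall>x. \<exists>u. \<not> ur u \<and> (\<forall>w. mem w u \<longleftrightarrow> (\<exists>y. mem y x \<and> mem w y))) \<and>
    \<comment> \<open>Powerset\<close>
    (\<forall>x. \<exists>p. \<not> ur p \<and> (\<forall>y. mem y p \<longleftrightarrow> (\<not> ur y \<and> (\<forall>z. mem z y \<longrightarrow> mem z x)))) \<and>
    \<comment> \<open>Separation (schema, with parameters)\<close>
    (\<forall>\<phi> v e x. \<exists>y. \<not> ur y \<and>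
        (\<forall>z. mem z y \<longleftrightarrow> (mem z x \<and> sat mem ur (e(v := z)) \<phi>))) \<and>
    \<comment> \<open>Infinity\<close>
    (\<exists>x. \<not> ur x \<and> (\<exists>e0. mem e0 x \<and> \<not> ur e0 \<and> (\<forall>z. \<not> mem z e0)) \<and>
        (\<forall>y. mem y x \<longrightarrow> (\<exists>s. mem s x \<and> (\<forall>w. mem w s \<longleftrightarrow> (mem w y \<or> w = y))))) \<and>
    \<comment> \<open>Replacement (schema, with parameters)\<close>
    (\<forall>\<phi> u v e a. (\<forall>x. mem x a \<longrightarrow> (\<exists>!y. sat mem ur (e(u := x, v := y)) \<phi>)) \<longrightarrow>
        (\<exists>b. \<not> ur b \<and> (\<forall>y. mem y b \<longleftrightarrow> (\<exists>x. mem x a \<and> sat mem ur (e(u := x, v := y)) \<phi>)))) \<and>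
    \<comment> \<open>AC: every set is well-orderable\<close>
    (\<forall>x. \<not> ur x \<longrightarrow> (\<exists>r. wellorders_in mem ur r x))"

end

theory Submission
  imports Defs
begin


datatype dfm = DMem nat nat | DUr nat | DEq nat nat | DNeg dfm | DConj dfm dfm | DEx dfm

definition cons_env :: "'a \<Rightarrow> (nat \<Rightarrow> 'a) \<Rightarrow> nat \<Rightarrow> 'a" (infixr "##" 65) where
  "cons_env a r n = (case n of 0 \<Rightarrow> a | Suc m \<Rightarrow> r m)"

lemma cons_env_simps[simp]:
  "(a ## r) 0 = a" "(a ## r) (Suc n) = r n" "(a ## r) (numeral k) = r (pred_numeral k)"
  "(a ## r) 1 = r 0"
  by (simp_all add: cons_env_def numeral_eq_Suc)

primrec dsat :: "('a \<Rightarrow> 'a \<Rightarrow> bool) \<Rightarrow> ('a \<Rightarrow> bool) \<Rightarrow> (nat \<Rightarrow> 'a) \<Rightarrow> dfm \<Rightarrow> bool" where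
  "dsat mem ur r (DMem i j) = mem (r i) (r j)"
| "dsat mem ur r (DUr i) = ur (r i)"
| "dsat mem ur r (DEq i j) = (r i = r j)"
| "dsat mem ur r (DNeg p) = (\<not> dsat mem ur r p)"
| "dsat mem ur r (DConj p q) = (dsat mem ur r p \<and> dsat mem ur r q)"
| "dsat mem ur r (DEx p) = (\<exists>a. dsat mem ur (a ## r) p)"

definition vv :: "nat \<Rightarrow> nat \<Rightarrow> nat" where
  "vv d i = (if i < d then 2*(d-1-i)+1 else 2*(i-d))"

primrec dcomp :: "nat \<Rightarrow> dfm \<Rightarrow> fm" where
  "dcomp d (DMem i j) = FMem (vv d i) (vv d j)"
| "dcomp d (DUr i) = FUr (vv d i)"
| "dcomp d (DEq i j) = FEq (vv d i) (vv d j)"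
| "dcomp d (DNeg p) = FNeg (dcomp d p)"
| "dcomp d (DConj p q) = FConj (dcomp d p) (dcomp d q)"
| "dcomp d (DEx p) = FEx (2*d+1) (dcomp (Suc d) p)"

lemma comp_sat0: "sat mem ur e (dcomp d p) = dsat mem ur (\<lambda>i. e (vv d i)) p"
proof (induction p arbitrary: d r e)
  case (DEx p)
  have "(\<lambda>i. (e(2*d+1 := a)) (vv (Suc d) i)) = a ## (\<lambda>i. e (vv d i))" for a
  proof 
    fix i show "(e(2 * d + 1 := a)) (vv (Suc d) i) = (a ## (\<lambda>i. e (vv d i))) i"
    proof (cases i)
      case 0 then show ?thesis by (simp add: vv_def)
    next
      case (Suc k)
      have "vv (Suc d) (Suc k) = vv d k" by (simp add: vv_def)
      moreover have "vv d k \<noteq> 2*d+1" by (auto simp: vv_def) presburger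
      ultimately show ?thesis using Suc by simp
    qed
  qed
  then show ?case using DEx.IH by simp
qed simp_all

lemma comp_sat: "(\<forall>i. r i = e (vv d i)) \<Longrightarrow> sat mem ur e (dcomp d p) = dsat mem ur r p"
proof -
  assume "\<forall>i. r i = e (vv d i)"
  then have "r = (\<lambda>i. e (vv d i))" by auto
  then show ?thesis by (simp add: comp_sat0)
qed

definition DOr where "DOr a b = DNeg (DConj (DNeg a) (DNeg b))"
definition DImp where "DImp a b = DNeg (DConj a (DNeg b))"
definition DAll where "DAll a = DNeg (DEx (DNeg a))"
definition DIff where "DIff a b = DConj (DImp a b) (DImp b a)"

lemma dsat_derived[simp]:
  "dsat mem ur r (DOr a b) = (dsat mem ur r a \<or> dsat mem ur r b)"
  "dsat mem ur r (DImp a b) = (dsat mem ur r a \<longrightarrow> dsat mem ur r b)"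
  "dsat mem ur r (DAll a) = (\<forall>x. dsat mem ur (x ## r) a)"
  "dsat mem ur r (DIff a b) = (dsat mem ur r a \<longleftrightarrow> dsat mem ur r b)"
  by (auto simp: DOr_def DImp_def DAll_def DIff_def)

definition dupair where
  "dupair i j k = DConj (DNeg (DUr k)) (DAll (DIff (DMem 0 (Suc k)) (DOr (DEq 0 (Suc i)) (DEq 0 (Suc j)))))"
definition dopair where
  "dopair i j k = DEx (DEx (DConj (dupair (i+2) (i+2) 1) (DConj (dupair (i+2) (j+2) 0) (dupair 1 0 (k+2)))))"
definition drel where
  "drel f i j = DEx (DConj (DMem 0 (Suc f)) (dopair (Suc i) (Suc j) 0))"

lemma dsat_upair[simp]: "dsat mem ur r (dupair i j k) = upair_in mem ur (r i) (r j) (r k)"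
  by (simp add: dupair_def upair_in_def)
lemma dsat_opair[simp]: "dsat mem ur r (dopair i j k) = opair_in mem ur (r i) (r j) (r k)"
  by (simp add: dopair_def opair_in_def numeral_eq_Suc)
lemma dsat_rel[simp]: "dsat mem ur r (drel f i j) = rel_in mem ur (r f) (r i) (r j)"
  by (simp add: drel_def rel_in_def)

locale M =
  fixes mem :: "'a \<Rightarrow> 'a \<Rightarrow> bool" and ur :: "'a \<Rightarrow> bool"
  assumes ax: "ZFCU_R mem ur"
begin

lemma sep: assumes "\<forall>z. dsat mem ur (z ## r) p = P z"
  shows "\<exists>y. \<not> ur y \<and> (\<forall>z. mem z y \<longleftrightarrow> mem z x \<and> P z)"
proof -
  define e where "e = (\<lambda>n. r (n div 2 - 1))"
  from ax[unfolded ZFCU_R_def, THEN conjunct2, THEN conjunct2, THEN conjunct2, THEN conjunct2, THEN conjunct2, THEN conjunct2, THEN conjunct1]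
  have "\<exists>y. \<not> ur y \<and> (\<forall>z. mem z y \<longleftrightarrow> (mem z x \<and> sat mem ur (e(0 := z)) (dcomp 0 p)))"
    by blast
  moreover have "sat mem ur (e(0 := z)) (dcomp 0 p) = P z" for z
  proof -
    have "sat mem ur (e(0 := z)) (dcomp 0 p) = dsat mem ur (z ## r) p"
      by (rule comp_sat) (auto simp: vv_def e_def cons_env_def split: nat.split)
    then show ?thesis using assms by simp
  qed
  ultimately show ?thesis by simp
qed

end


context M begin

abbreviation "upair \<equiv> upair_in mem ur"
abbreviation "opair \<equiv> opair_in mem ur"
abbreviation "rel \<equiv> rel_in mem ur"
abbreviation "urset \<equiv> urset_in mem ur"

lemmas axs = ax[unfolded ZFCU_R_def]
lemma ur_empty: "ur x \<Longrightarrow> \<not> mem y x" using axs[THEN conjunct1] by blast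
lemma extn: "\<not> ur x \<Longrightarrow> \<not> ur y \<Longrightarrow> (\<And>z. mem z x \<longleftrightarrow> mem z y) \<Longrightarrow> x = y"
  using axs[THEN conjunct2, THEN conjunct1] by blast
lemma upair_ex: "\<exists>z. upair x y z" using axs[THEN conjunct2, THEN conjunct2, THEN conjunct2, THEN conjunct1] by blast
lemma union_ax: "\<exists>u. \<not> ur u \<and> (\<forall>w. mem w u \<longleftrightarrow> (\<exists>y. mem y x \<and> mem w y))"
  using axs[THEN conjunct2, THEN conjunct2, THEN conjunct2, THEN conjunct2, THEN conjunct1] by blast
lemma pow_ex: "\<exists>p. \<not> ur p \<and> (\<forall>y. mem y p \<longleftrightarrow> (\<not> ur y \<and> (\<forall>z. mem z y \<longrightarrow> mem z x)))"
  using axs[THEN conjunct2, THEN conjunct2, THEN conjunct2, THEN conjunct2, THEN conjunct2, THEN conjunct1] by blast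
lemma sep_ax: "\<exists>y. \<not> ur y \<and> (\<forall>z. mem z y \<longleftrightarrow> (mem z x \<and> sat mem ur (e(v := z)) phi))"
  using axs[THEN conjunct2, THEN conjunct2, THEN conjunct2, THEN conjunct2, THEN conjunct2, THEN conjunct2, THEN conjunct1] by blast
lemma inf_ax: "\<exists>x. \<not> ur x \<and> (\<exists>e0. mem e0 x \<and> \<not> ur e0 \<and> (\<forall>z. \<not> mem z e0)) \<and>
        (\<forall>y. mem y x \<longrightarrow> (\<exists>s. mem s x \<and> (\<forall>w. mem w s \<longleftrightarrow> (mem w y \<or> w = y))))"
  using axs[THEN conjunct2, THEN conjunct2, THEN conjunct2, THEN conjunct2, THEN conjunct2, THEN conjunct2, THEN conjunct2, THEN conjunct1] by blast
lemma wo_ex: "\<not> ur x \<Longrightarrow> \<exists>r. wellorders_in mem ur r x"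
  using axs[THEN conjunct2, THEN conjunct2, THEN conjunct2, THEN conjunct2, THEN conjunct2, THEN conjunct2, THEN conjunct2, THEN conjunct2, THEN conjunct2] by blast
lemma empty_ex: "\<exists>e. \<not> ur e \<and> (\<forall>z. \<not> mem z e)"
  using inf_ax by blast

lemma union2_ex: "\<exists>u. \<not> ur u \<and> (\<forall>w. mem w u \<longleftrightarrow> mem w X \<or> mem w Y)"
proof -
  obtain z where z: "upair X Y z" using upair_ex by blast
  obtain u where u: "\<not> ur u" "\<forall>w. mem w u \<longleftrightarrow> (\<exists>y. mem y z \<and> mem w y)" using union_ax by blast
  have "mem w u \<longleftrightarrow> mem w X \<or> mem w Y" for w using u z unfolding upair_in_def by auto
  then show ?thesis using u by blast
qed

lemma upair_unique: "upair x y z \<Longrightarrow> upair x y z' \<Longrightarrow> z = z'"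
  unfolding upair_in_def by (rule extn) auto

lemma opair_ex: "\<exists>p. opair x y p"
proof -
  obtain s t where "upair x x s" "upair x y t" using upair_ex by blast
  moreover obtain p where "upair s t p" using upair_ex by blast
  ultimately show ?thesis unfolding opair_in_def by blast
qed

lemma opair_unique: "opair x y p \<Longrightarrow> opair x y p' \<Longrightarrow> p = p'"
  unfolding opair_in_def by (metis upair_unique)

lemma upair_ext: "upair x y z \<Longrightarrow> {w. mem w z} = {x, y}"
  unfolding upair_in_def by auto

lemma upair_inj: "upair x y z \<Longrightarrow> upair x' y' z \<Longrightarrow> {x,y} = {x',y'}"
  using upair_ext by blast

lemma opair_inj: assumes "opair x y p" "opair x' y' p" shows "x = x' \<and> y = y'"
proof -
  obtain s t where st: "upair x x s" "upair x y t" "upair s t p" using assms(1) unfolding opair_in_def by blast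
  obtain s' t' where st': "upair x' x' s'" "upair x' y' t'" "upair s' t' p" using assms(2) unfolding opair_in_def by blast
  have e1: "{s,t} = {s',t'}" using st(3) st'(3) upair_inj by blast
  have es: "{w. mem w s} = {x}" "{w. mem w t} = {x,y}" "{w. mem w s'} = {x'}" "{w. mem w t'} = {x',y'}"
    using st st' upair_ext by auto
  have "{{x},{x,y}} = {{x'},{x',y'}}"
    using e1 es by (auto simp: doubleton_eq_iff)
  then show ?thesis by (simp add: doubleton_eq_iff) blast
qed

lemma opair_sets: "opair x y p \<Longrightarrow> \<not> ur p" unfolding opair_in_def upair_in_def by blast

lemma pairs_set_ex: "\<exists>P. \<not> ur P \<and> (\<forall>x y p. mem x W1 \<and> mem y W2 \<and> opair x y p \<longrightarrow> mem p P)"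
proof -
  obtain U where U: "\<not> ur U" "\<forall>w. mem w U \<longleftrightarrow> mem w W1 \<or> mem w W2" using union2_ex by blast
  obtain P1 where P1: "\<not> ur P1" "\<forall>y. mem y P1 \<longleftrightarrow> (\<not> ur y \<and> (\<forall>z. mem z y \<longrightarrow> mem z U))" using pow_ex by blast
  obtain P2 where P2: "\<not> ur P2" "\<forall>y. mem y P2 \<longleftrightarrow> (\<not> ur y \<and> (\<forall>z. mem z y \<longrightarrow> mem z P1))" using pow_ex by blast
  have "mem p P2" if h: "mem x W1" "mem y W2" "opair x y p" for x y p
  proof -
    obtain s t where st: "upair x x s" "upair x y t" "upair s t p" using h(3) unfolding opair_in_def by blast
    have "mem s P1" "mem t P1" using st U P1 h(1,2) unfolding upair_in_def by auto
    then show ?thesis using st(3) P2 unfolding upair_in_def by auto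
  qed
  then show ?thesis using P2 by blast
qed

lemma mk_rel:
  assumes "\<forall>x y p. dsat mem ur (y ## x ## p ## W1 ## W2 ## r) phi = R x y"
  shows "\<exists>f. \<not> ur f \<and> (\<forall>p. mem p f \<longleftrightarrow> (\<exists>x y. opair x y p \<and> mem x W1 \<and> mem y W2 \<and> R x y))"
proof -
  obtain P where P: "\<not> ur P" "\<forall>x y p. mem x W1 \<and> mem y W2 \<and> opair x y p \<longrightarrow> mem p P"
    using pairs_set_ex by blast
  let ?psi = "DEx (DEx (DConj (dopair 1 0 2) (DConj (DMem 1 3) (DConj (DMem 0 4) phi))))"
  have "\<forall>z. dsat mem ur (z ## W1 ## W2 ## r) ?psi = (\<exists>x y. opair x y z \<and> mem x W1 \<and> mem y W2 \<and> R x y)"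
    using assms by (simp add: numeral_eq_Suc)
  from sep[OF this, of P] obtain f where "\<not> ur f"
    "\<forall>z. mem z f \<longleftrightarrow> mem z P \<and> (\<exists>x y. opair x y z \<and> mem x W1 \<and> mem y W2 \<and> R x y)" by blast
  then show ?thesis using P by blast
qed

lemma rel_of:
  assumes "\<forall>p. mem p f \<longleftrightarrow> (\<exists>x y. opair x y p \<and> mem x W1 \<and> mem y W2 \<and> R x y)"
  shows "rel f a b \<longleftrightarrow> mem a W1 \<and> mem b W2 \<and> R a b"
proof
  assume "rel f a b"
  then obtain p where "mem p f" "opair a b p" unfolding rel_in_def by blast
  moreover then obtain x y where "opair x y p" "mem x W1" "mem y W2" "R x y" using assms by blast
  ultimately show "mem a W1 \<and> mem b W2 \<and> R a b" using opair_inj[of x y p a b] by simp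
next
  assume h: "mem a W1 \<and> mem b W2 \<and> R a b"
  obtain p where "opair a b p" using opair_ex by blast
  then show "rel f a b" using h assms unfolding rel_in_def by blast
qed

lemma mk_rel2:
  assumes "\<forall>x y p. dsat mem ur (y ## x ## p ## W1 ## W2 ## r) phi = R x y"
  shows "\<exists>f. \<not> ur f \<and> (\<forall>p. mem p f \<longrightarrow> (\<exists>x y. opair x y p \<and> mem x W1 \<and> mem y W2))
     \<and> (\<forall>a b. rel f a b \<longleftrightarrow> mem a W1 \<and> mem b W2 \<and> R a b)"
proof -
  obtain f where f: "\<not> ur f" "\<forall>p. mem p f \<longleftrightarrow> (\<exists>x y. opair x y p \<and> mem x W1 \<and> mem y W2 \<and> R x y)"
    using mk_rel[OF assms] by blast
  show ?thesis using f rel_of[OF f(2)] by blast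
qed

lemma members_rel:
  assumes "\<forall>p. mem p f \<longrightarrow> (\<exists>x y. opair x y p \<and> mem x X \<and> mem y Y)" "rel f a b"
  shows "mem a X \<and> mem b Y"
proof -
  obtain p where "mem p f" "opair a b p" using assms(2) unfolding rel_in_def by blast
  moreover then obtain x y where "opair x y p" "mem x X" "mem y Y" using assms(1) by blast
  ultimately show ?thesis using opair_inj[of x y p a b] by simp
qed

lemma sep2: assumes "\<forall>z. dsat mem ur (z ## r) p = P z"
  shows "\<exists>y. \<not> ur y \<and> (\<forall>z. mem z y \<longleftrightarrow> mem z x \<and> P z)" using sep assms by blast

end


definition dact where
  "dact p D a b = DOr (DConj (DMem a D) (drel p a b)) (DConj (DNeg (DMem a D)) (DEq b a))"
lemma dsat_act[simp]: "dsat mem ur r (dact p D a b) = act_in mem ur (r p) (r D) (r a) (r b)"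
  by (auto simp: dact_def act_in_def)

context M begin

lemma bij_rel: "bij_in mem ur f B C \<Longrightarrow> rel f u v \<Longrightarrow> mem u B \<and> mem v C"
  unfolding bij_in_def using members_rel by blast

lemma act_fun: assumes "bij_in mem ur p D D" shows "\<exists>!y. act_in mem ur p D x y"
proof (cases "mem x D")
  case True
  then obtain y where "rel p x y" "\<forall>y'. rel p x y' \<longrightarrow> y' = y" using assms unfolding bij_in_def by metis
  then show ?thesis using True unfolding act_in_def by blast
next
  case False then show ?thesis unfolding act_in_def by blast
qed

lemma act_inj: assumes "bij_in mem ur p D D" shows "\<exists>!x. act_in mem ur p D x y"
proof (cases "mem y D")
  case True
  then obtain x where x: "rel p x y" "\<forall>x'. rel p x' y \<longrightarrow> x' = x" using assms unfolding bij_in_def by metis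
  then have "mem x D" using bij_rel[OF assms] by blast
  then show ?thesis using True x unfolding act_in_def by blast
next
  case False
  have "\<not> (mem x D \<and> rel p x y)" for x using bij_rel[OF assms] False by blast
  then show ?thesis using False unfolding act_in_def by blast
qed

lemma part2:
  assumes A: "urset A" and A': "urset A'" and sub: "\<forall>x. mem x A \<longrightarrow> mem x A'"
    and H: "homogeneous_over mem ur A"
  shows "homogeneous_over mem ur A'"
  unfolding homogeneous_over_def
proof (intro allI impI, elim conjE)
  fix B C
  assume B: "urset B" and C: "urset C" and disj: "\<forall>u. mem u B \<or> mem u C \<longrightarrow> \<not> mem u A'"
    and eq: "equinum_in mem ur B C"
  obtain f where f: "bij_in mem ur f B C" using eq unfolding equinum_in_def by blast
  have frel: "rel f u v \<Longrightarrow> mem u B \<and> mem v C" for u v using bij_rel[OF f] .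
  have ftot: "mem u B \<Longrightarrow> \<exists>!v. rel f u v" for u using f unfolding bij_in_def by blast
  have fsur: "mem v C \<Longrightarrow> \<exists>!u. rel f u v" for v using f unfolding bij_in_def by blast
  obtain F where F: "\<not> ur F" "\<forall>z. mem z F \<longleftrightarrow> mem z A' \<and> \<not> mem z A"
    using sep2[of "A ## undefined" "DNeg (DMem 0 1)" "\<lambda>z. \<not> mem z A" A'] by (simp, blast?)
  obtain B1 where B1: "\<not> ur B1" "\<forall>w. mem w B1 \<longleftrightarrow> mem w B \<or> mem w F" using union2_ex by blast
  obtain C1 where C1: "\<not> ur C1" "\<forall>w. mem w C1 \<longleftrightarrow> mem w C \<or> mem w F" using union2_ex by blast
  obtain f1 where f1: "\<not> ur f1" "\<forall>p. mem p f1 \<longrightarrow> (\<exists>x y. opair x y p \<and> mem x B1 \<and> mem y C1)"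
    "\<forall>a b. rel f1 a b \<longleftrightarrow> mem a B1 \<and> mem b C1 \<and> (rel f a b \<or> (mem a F \<and> b = a))"
    using mk_rel2[of B1 C1 "f ## F ## undefined" "DOr (drel 5 1 0) (DConj (DMem 1 6) (DEq 0 1))"
        "\<lambda>a b. rel f a b \<or> (mem a F \<and> b = a)"] by (simp add: numeral_eq_Suc, blast?)
  have BF: "mem u B \<Longrightarrow> \<not> mem u F" for u using disj F by blast
  have CF: "mem u C \<Longrightarrow> \<not> mem u F" for u using disj F by blast
  have f1bij: "bij_in mem ur f1 B1 C1"
    unfolding bij_in_def
  proof (intro conjI allI impI)
    show "\<And>p. mem p f1 \<Longrightarrow> \<exists>u v. opair u v p \<and> mem u B1 \<and> mem v C1" using f1 by blast
  next
    fix u assume u: "mem u B1"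
    show "\<exists>!v. rel f1 u v"
    proof (cases "mem u B")
      case True
      then obtain v where v: "rel f u v" "\<forall>v'. rel f u v' \<longrightarrow> v' = v" using ftot by metis
      then have "rel f1 u v" using f1(3) u frel C1 by blast
      moreover have "rel f1 u v' \<Longrightarrow> v' = v" for v' using f1(3) v BF True by blast
      ultimately show ?thesis by blast
    next
      case False
      then have uF: "mem u F" using u B1 by blast
      have nf: "\<not> rel f u v" for v using frel False by blast
      have "rel f1 u u" using f1(3) u uF C1 by blast
      moreover have "rel f1 u v' \<Longrightarrow> v' = u" for v' using f1(3) nf by blast
      ultimately show ?thesis by blast
    qed
  next
    fix v assume v: "mem v C1"
    show "\<exists>!u. rel f1 u v"
    proof (cases "mem v C")
      case True
      then obtain u where u: "rel f u v" "\<forall>u'. rel f u' v \<longrightarrow> u' = u" using fsur by metis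
      then have "rel f1 u v" using f1(3) v frel B1 by blast
      moreover have "rel f1 u' v \<Longrightarrow> u' = u" for u' using f1(3) u CF True by blast
      ultimately show ?thesis by blast
    next
      case False
      then have vF: "mem v F" using v C1 by blast
      have nf: "\<not> rel f u v" for u using frel False by blast
      have "rel f1 v v" using f1(3) v vF B1 by blast
      moreover have "rel f1 u' v \<Longrightarrow> u' = v" for u' using f1(3) nf by blast
      ultimately show ?thesis by blast
    qed
  qed
  have "urset B1" using B1 B A' F unfolding urset_in_def by blast
  moreover have "urset C1" using C1 C A' F unfolding urset_in_def by blast
  moreover have "\<forall>u. mem u B1 \<or> mem u C1 \<longrightarrow> \<not> mem u A" using B1 C1 F disj sub by blast
  moreover have "equinum_in mem ur B1 C1" using f1bij unfolding equinum_in_def by blast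
  ultimately obtain D1 p1 where D1: "urset D1" "bij_in mem ur p1 D1 D1"
    "\<forall>a. mem a A \<longrightarrow> act_in mem ur p1 D1 a a"
    "\<forall>c. mem c C1 \<longleftrightarrow> (\<exists>b. mem b B1 \<and> act_in mem ur p1 D1 b c)"
    using H unfolding homogeneous_over_def by blast
  define P where "P = act_in mem ur p1 D1"
  have Pf: "\<exists>!y. P x y" for x unfolding P_def by (rule act_fun[OF D1(2)])
  have Pi: "\<exists>!x. P x y" for y unfolding P_def by (rule act_inj[OF D1(2)])
  have PA: "mem a A \<Longrightarrow> P a a" for a using D1(3) P_def by blast
  have PC1: "mem c C1 \<longleftrightarrow> (\<exists>b. mem b B1 \<and> P b c)" for c using D1(4) P_def by blast
  have PD: "P x y \<Longrightarrow> \<not> mem x D1 \<Longrightarrow> y = x" for x y unfolding P_def act_in_def by blast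
  have PD2: "P x y \<Longrightarrow> mem x D1 \<Longrightarrow> mem y D1" for x y
    unfolding P_def act_in_def using bij_rel[OF D1(2)] by blast
  obtain U where U: "\<not> ur U" "\<forall>w. mem w U \<longleftrightarrow> mem w B \<or> mem w C \<or> mem w D1"
  proof -
    obtain U0 where U0: "\<not> ur U0" "\<forall>w. mem w U0 \<longleftrightarrow> mem w B \<or> mem w C" using union2_ex by blast
    obtain U where "\<not> ur U" "\<forall>w. mem w U \<longleftrightarrow> mem w U0 \<or> mem w D1" using union2_ex by blast
    then show ?thesis using that U0 by blast
  qed
  obtain W where W: "\<not> ur W" "\<forall>z. mem z W \<longleftrightarrow> mem z U \<and> \<not> mem z A'"
    using sep2[of "A' ## undefined" "DNeg (DMem 0 1)" "\<lambda>z. \<not> mem z A'" U] by (simp, blast?)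
  have BW: "mem b B \<Longrightarrow> mem b W" for b using W U disj by blast
  have CW: "mem b C \<Longrightarrow> mem b W" for b using W U disj by blast
  have PWA: "P x y \<Longrightarrow> \<not> mem x A \<Longrightarrow> \<not> mem y A" for x y using PA Pi by metis
  have fwd: "mem y W \<and> \<not> mem y C" if x: "mem x W" "\<not> mem x B" and xy: "P x y" for x y
  proof -
    have xA': "\<not> mem x A'" using x W by blast
    have xB1: "\<not> mem x B1" using x xA' B1 F by blast
    have nA: "\<not> mem y A" using PWA xy xA' sub by blast
    have nC1: "\<not> mem y C1"
    proof
      assume "mem y C1"
      then obtain b where "mem b B1" "P b y" using PC1 by blast
      then show False using xB1 xy Pi by blast
    qed
    have nF: "\<not> mem y A'" using nA nC1 C1 F by blast
    have "mem y U"
    proof (cases "mem x D1")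
      case True then show ?thesis using PD2 xy U by blast
    next
      case False then show ?thesis using PD xy x W by blast
    qed
    then show ?thesis using nF nC1 C1 W by blast
  qed
  have bwd: "\<exists>x. mem x W \<and> \<not> mem x B \<and> P x y" if y: "mem y W" "\<not> mem y C" for y
  proof -
    obtain x where xy: "P x y" using Pi by blast
    have yA': "\<not> mem y A'" using y W by blast
    have nC1: "\<not> mem y C1" using y yA' C1 F by blast
    have xB1: "\<not> mem x B1" using PC1 nC1 xy by blast
    have xA: "\<not> mem x A"
    proof
      assume "mem x A"
      then have "P x x" using PA by blast
      then have "y = x" using xy Pf by blast
      then show False using \<open>mem x A\<close> yA' sub by blast
    qed
    have xA': "\<not> mem x A'" using xA xB1 B1 F by blast
    have "mem x U"
    proof (cases "mem x D1")
      case True then show ?thesis using U by blast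
    next
      case False then show ?thesis using PD xy y W by blast
    qed
    then show ?thesis using xA' xB1 B1 W xy by blast
  qed
  obtain p where p: "\<not> ur p" "\<forall>q. mem q p \<longrightarrow> (\<exists>x y. opair x y q \<and> mem x W \<and> mem y W)"
    "\<forall>a b. rel p a b \<longleftrightarrow> mem a W \<and> mem b W \<and> ((mem a B \<and> rel f a b) \<or> (\<not> mem a B \<and> P a b))"
    using mk_rel2[of W W "B ## f ## p1 ## D1 ## undefined"
        "DOr (DConj (DMem 1 5) (drel 6 1 0)) (DConj (DNeg (DMem 1 5)) (dact 7 8 1 0))"
        "\<lambda>a b. (mem a B \<and> rel f a b) \<or> (\<not> mem a B \<and> P a b)"] unfolding P_def
    by (simp add: numeral_eq_Suc, blast?)
  have pbij: "bij_in mem ur p W W"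
    unfolding bij_in_def
  proof (intro conjI allI impI)
    show "\<And>q. mem q p \<Longrightarrow> \<exists>u v. opair u v q \<and> mem u W \<and> mem v W" using p by blast
  next
    fix u assume u: "mem u W"
    show "\<exists>!v. rel p u v"
    proof (cases "mem u B")
      case True
      then obtain v where v: "rel f u v" "\<forall>v'. rel f u v' \<longrightarrow> v' = v" using ftot by metis
      then have "rel p u v" using p(3) u frel CW True by blast
      moreover have "rel p u v' \<Longrightarrow> v' = v" for v' using p(3) v True by blast
      ultimately show ?thesis by blast
    next
      case False
      obtain v where v: "P u v" using Pf by blast
      then have "rel p u v" using p(3) u False fwd by blast
      moreover have "rel p u v' \<Longrightarrow> v' = v" for v' using p(3) v False Pf by blast
      ultimately show ?thesis by blast
    qed
  next
    fix v assume v: "mem v W"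
    show "\<exists>!u. rel p u v"
    proof (cases "mem v C")
      case True
      then obtain u where u: "rel f u v" "\<forall>u'. rel f u' v \<longrightarrow> u' = u" using fsur by metis
      then have "rel p u v" using p(3) v frel BW by blast
      moreover have "rel p u' v \<Longrightarrow> u' = u" for u' using p(3) u True fwd by blast
      ultimately show ?thesis by blast
    next
      case False
      obtain u where u: "mem u W" "\<not> mem u B" "P u v" using bwd v False by blast
      then have "rel p u v" using p(3) v by blast
      moreover have "rel p u' v \<Longrightarrow> u' = u" for u' using p(3) u False frel Pi by blast
      ultimately show ?thesis by blast
    qed
  qed
  have "urset W" using W U B C D1(1) unfolding urset_in_def by blast
  moreover have "\<forall>a. mem a A' \<longrightarrow> act_in mem ur p W a a" using W unfolding act_in_def by blast
  moreover have "\<forall>c. mem c C \<longleftrightarrow> (\<exists>b. mem b B \<and> act_in mem ur p W b c)"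
  proof (intro allI iffI)
    fix c assume c: "mem c C"
    then obtain b where "rel f b c" using fsur by blast
    then have "mem b B" "rel p b c" using p(3) frel BW CW by blast+
    then show "\<exists>b. mem b B \<and> act_in mem ur p W b c" using BW unfolding act_in_def by blast
  next
    fix c assume "\<exists>b. mem b B \<and> act_in mem ur p W b c"
    then obtain b where "mem b B" "act_in mem ur p W b c" by blast
    then have "rel f b c" using BW p(3) unfolding act_in_def by blast
    then show "mem c C" using frel by blast
  qed
  ultimately show "\<exists>D p. urset D \<and> bij_in mem ur p D D \<and> (\<forall>a. mem a A' \<longrightarrow> act_in mem ur p D a a) \<and>
           (\<forall>c. mem c C = (\<exists>b. mem b B \<and> act_in mem ur p D b c))" using pbij by blast
qed

end


definition inj_in :: "('a \<Rightarrow> 'a \<Rightarrow> bool) \<Rightarrow> ('a \<Rightarrow> bool) \<Rightarrow> 'a \<Rightarrow> 'a \<Rightarrow> 'a \<Rightarrow> bool" where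
  "inj_in mem ur g X Y \<longleftrightarrow> (\<forall>p. mem p g \<longrightarrow> (\<exists>u v. opair_in mem ur u v p \<and> mem u X \<and> mem v Y)) \<and>
     (\<forall>u. mem u X \<longrightarrow> (\<exists>v. rel_in mem ur g u v)) \<and>
     (\<forall>u v u' v'. rel_in mem ur g u v \<and> rel_in mem ur g u' v' \<longrightarrow> (u = u' \<longleftrightarrow> v = v'))"

definition iso_in :: "('a \<Rightarrow> 'a \<Rightarrow> bool) \<Rightarrow> ('a \<Rightarrow> bool) \<Rightarrow> 'a \<Rightarrow> 'a \<Rightarrow> 'a \<Rightarrow> 'a \<Rightarrow> 'a \<Rightarrow> 'a \<Rightarrow> 'a \<Rightarrow> bool" where
  "iso_in mem ur h W r x S R y \<longleftrightarrow>
     (\<forall>u v. rel_in mem ur h u v \<longrightarrow> mem u W \<and> rel_in mem ur r u x \<and> mem v S \<and> rel_in mem ur R v y) \<and>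
     (\<forall>u. mem u W \<and> rel_in mem ur r u x \<longrightarrow> (\<exists>v. rel_in mem ur h u v)) \<and>
     (\<forall>v. mem v S \<and> rel_in mem ur R v y \<longrightarrow> (\<exists>u. rel_in mem ur h u v)) \<and>
     (\<forall>u v u' v'. rel_in mem ur h u v \<and> rel_in mem ur h u' v' \<longrightarrow>
        (rel_in mem ur r u u' \<longleftrightarrow> rel_in mem ur R v v'))"

definition dinj where
  "dinj g X Y = DConj (DAll (DImp (DMem 0 (Suc g)) (DEx (DEx (DConj (dopair 1 0 2) (DConj (DMem 1 (X+3)) (DMem 0 (Y+3))))))))
     (DConj (DAll (DImp (DMem 0 (Suc X)) (DEx (drel (g+2) 1 0))))
       (DAll (DAll (DAll (DAll (DImp (DConj (drel (g+4) 3 2) (drel (g+4) 1 0)) (DIff (DEq 3 1) (DEq 2 0))))))))"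

lemma dsat_inj[simp]: "dsat mem ur e (dinj g X Y) = inj_in mem ur (e g) (e X) (e Y)"
  unfolding dinj_def inj_in_def by (simp add: numeral_eq_Suc)

definition diso where
  "diso h W r x S R y = DConj (DAll (DAll (DImp (drel (h+2) 1 0)
        (DConj (DMem 1 (W+2)) (DConj (drel (r+2) 1 (x+2)) (DConj (DMem 0 (S+2)) (drel (R+2) 0 (y+2))))))))
     (DConj (DAll (DImp (DConj (DMem 0 (W+1)) (drel (r+1) 0 (x+1))) (DEx (drel (h+2) 1 0))))
     (DConj (DAll (DImp (DConj (DMem 0 (S+1)) (drel (R+1) 0 (y+1))) (DEx (drel (h+2) 0 1))))
       (DAll (DAll (DAll (DAll (DImp (DConj (drel (h+4) 3 2) (drel (h+4) 1 0)) (DIff (drel (r+4) 3 1) (drel (R+4) 2 0)))))))))"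

lemma dsat_iso[simp]: "dsat mem ur e (diso h W r x S R y) = iso_in mem ur (e h) (e W) (e r) (e x) (e S) (e R) (e y)"
  unfolding diso_def iso_in_def by (simp add: numeral_eq_Suc)



context M begin

abbreviation "wo \<equiv> wellorders_in mem ur"
abbreviation "isom \<equiv> iso_in mem ur"

lemma wo_irr: "wo r W \<Longrightarrow> mem u W \<Longrightarrow> \<not> rel r u u" unfolding wellorders_in_def by blast
lemma wo_trans: "wo r W \<Longrightarrow> mem u W \<Longrightarrow> mem v W \<Longrightarrow> mem w W \<Longrightarrow> rel r u v \<Longrightarrow> rel r v w \<Longrightarrow> rel r u w"
  unfolding wellorders_in_def by blast
lemma wo_total: "wo r W \<Longrightarrow> mem u W \<Longrightarrow> mem v W \<Longrightarrow> rel r u v \<or> u = v \<or> rel r v u"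
  unfolding wellorders_in_def by blast
lemma wo_least: "wo r W \<Longrightarrow> (\<And>u. mem u s \<Longrightarrow> mem u W) \<Longrightarrow> mem u0 s \<Longrightarrow> \<exists>m. mem m s \<and> (\<forall>u. mem u s \<longrightarrow> \<not> rel r u m)"
  unfolding wellorders_in_def by blast
lemma wo_asym: "wo r W \<Longrightarrow> mem u W \<Longrightarrow> mem v W \<Longrightarrow> rel r u v \<Longrightarrow> \<not> rel r v u"
  using wo_irr wo_trans by metis
lemma wo_sub: assumes w: "wo r W" and s: "\<And>u. mem u V \<Longrightarrow> mem u W" shows "wo r V"
  unfolding wellorders_in_def
proof (intro conjI allI impI)
  show "\<And>u. mem u V \<Longrightarrow> \<not> rel r u u" using wo_irr[OF w] s by blast
  show "\<And>u v x. mem u V \<and> mem v V \<and> mem x V \<and> rel r u v \<and> rel r v x \<Longrightarrow> rel r u x"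
    using wo_trans[OF w] s by blast
  show "\<And>u v. mem u V \<and> mem v V \<Longrightarrow> rel r u v \<or> u = v \<or> rel r v u" using wo_total[OF w] s by blast
  fix t assume "(\<forall>u. mem u t \<longrightarrow> mem u V) \<and> (\<exists>u. mem u t)"
  then show "\<exists>m. mem m t \<and> (\<forall>u. mem u t \<longrightarrow> \<not> rel r u m)" using wo_least[OF w, of t] s by blast
qed

lemma iso_c1: "isom h W r x S R y \<Longrightarrow> rel h u v \<Longrightarrow> mem u W \<and> rel r u x \<and> mem v S \<and> rel R v y"
  unfolding iso_in_def by blast
lemma iso_c2: "isom h W r x S R y \<Longrightarrow> mem u W \<Longrightarrow> rel r u x \<Longrightarrow> \<exists>v. rel h u v"
  unfolding iso_in_def by blast
lemma iso_c3: "isom h W r x S R y \<Longrightarrow> mem v S \<Longrightarrow> rel R v y \<Longrightarrow> \<exists>u. rel h u v"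
  unfolding iso_in_def by blast
lemma iso_c4: "isom h W r x S R y \<Longrightarrow> rel h u v \<Longrightarrow> rel h u' v' \<Longrightarrow> rel r u u' \<longleftrightarrow> rel R v v'"
  unfolding iso_in_def by blast

lemma iso_intro:
  "(\<And>u v. rel h u v \<Longrightarrow> mem u W \<and> rel r u x \<and> mem v S \<and> rel R v y) \<Longrightarrow>
   (\<And>u. mem u W \<Longrightarrow> rel r u x \<Longrightarrow> \<exists>v. rel h u v) \<Longrightarrow>
   (\<And>v. mem v S \<Longrightarrow> rel R v y \<Longrightarrow> \<exists>u. rel h u v) \<Longrightarrow>
   (\<And>u v u' v'. rel h u v \<Longrightarrow> rel h u' v' \<Longrightarrow> rel r u u' \<longleftrightarrow> rel R v v') \<Longrightarrow> isom h W r x S R y"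
  unfolding iso_in_def by blast

lemma iso_fun: assumes "wo r W" "wo R S" "isom h W r x S R y" "rel h u v" "rel h u v'" shows "v = v'"
proof -
  have "mem u W" "mem v S" "mem v' S" using iso_c1[OF assms(3)] assms(4,5) by blast+
  moreover have "\<not> rel R v v'" "\<not> rel R v' v" using iso_c4[OF assms(3)] assms(4,5) wo_irr[OF assms(1)] \<open>mem u W\<close> by blast+
  ultimately show ?thesis using wo_total[OF assms(2)] by blast
qed

lemma iso_inj: assumes "wo r W" "wo R S" "isom h W r x S R y" "rel h u v" "rel h u' v" shows "u = u'"
proof -
  have "mem u W" "mem u' W" "mem v S" using iso_c1[OF assms(3)] assms(4,5) by blast+
  moreover have "\<not> rel r u u'" "\<not> rel r u' u" using iso_c4[OF assms(3)] assms(4,5) wo_irr[OF assms(2)] \<open>mem v S\<close> by blast+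
  ultimately show ?thesis using wo_total[OF assms(1)] by blast
qed

lemma iso_conv: assumes "isom h W r x S R y" "\<forall>u v. rel h' v u \<longleftrightarrow> rel h u v" shows "isom h' S R y W r x"
proof -
  have eq: "rel h' = (\<lambda>a b. rel h b a)" using assms(2) by (intro ext) blast
  note c = iso_c1[OF assms(1)] iso_c2[OF assms(1)] iso_c3[OF assms(1)] iso_c4[OF assms(1)]
  show ?thesis unfolding iso_in_def eq
    using c by (intro conjI allI impI) blast+
qed

lemma conv_ex: "\<exists>h'. \<forall>u v. rel h' v u \<longleftrightarrow> mem v S \<and> mem u W \<and> rel h u v"
proof -
  obtain g where g: "\<not> ur g" "\<forall>p. mem p g \<longrightarrow> (\<exists>x y. opair x y p \<and> mem x S \<and> mem y W)"
     "\<forall>a b. rel g a b \<longleftrightarrow> mem a S \<and> mem b W \<and> rel h b a"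
    using mk_rel2[of S W "h ## undefined" "drel 5 0 1" "\<lambda>a b. rel h b a"] by (simp add: numeral_eq_Suc, blast?)
  then show ?thesis by blast
qed

lemma iso_conv_ex: assumes "isom h W r x S R y" shows "\<exists>h'. isom h' S R y W r x"
proof -
  obtain h' where h': "\<forall>u v. rel h' v u \<longleftrightarrow> mem v S \<and> mem u W \<and> rel h u v" using conv_ex by blast
  have "\<forall>u v. rel h' v u \<longleftrightarrow> rel h u v" using h' iso_c1[OF assms] by blast
  then show ?thesis using iso_conv[OF assms] by blast
qed

lemma iso_agree_aux:
  assumes wr: "wo r W" and wR: "wo R S" and h: "isom h W r x S R y" and h': "isom h' W r x S R y'"
    and x: "mem x W" and y': "mem y' S"
    and u0: "rel h u0 v" "rel h' u0 v'" "rel R v v'"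
    and minim: "\<forall>u. mem u W \<and> rel r u u0 \<longrightarrow> (\<forall>w w'. rel h u w \<and> rel h' u w' \<longrightarrow> w = w')"
  shows False
proof -
  have v: "mem v S" "mem v' S" "rel R v' y'" "mem u0 W" using iso_c1[OF h] iso_c1[OF h'] u0 by blast+
  have "rel R v y'" using wo_trans[OF wR v(1,2) y' u0(3) v(3)] .
  then obtain u' where u': "rel h' u' v" using iso_c3[OF h'] v(1) by blast
  have u'W: "mem u' W" "rel r u' x" using iso_c1[OF h'] u' by blast+
  have "rel r u' u0" using iso_c4[OF h' u' u0(2)] u0(3) by blast
  obtain w where w: "rel h u' w" using iso_c2[OF h] u'W by blast
  have "w = v" using minim u'W \<open>rel r u' u0\<close> w u' by blast
  then have "u' = u0" using iso_inj[OF wr wR h] w u0(1) by blast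
  then show False using \<open>rel r u' u0\<close> wo_irr[OF wr] v(4) by blast
qed

lemma sep_seg: "\<exists>I. \<not> ur I \<and> (\<forall>u. mem u I \<longleftrightarrow> mem u W \<and> rel r u x)"
  using sep2[of "r ## x ## undefined" "drel 1 0 2" "\<lambda>u. rel r u x" W] by (simp add: numeral_eq_Suc, blast?)

lemma iso_agree:
  assumes wr: "wo r W" and wR: "wo R S" and h: "isom h W r x S R y" and h': "isom h' W r x S R y'"
    and x: "mem x W" and y: "mem y S" and y': "mem y' S"
  shows "\<forall>u w w'. rel h u w \<and> rel h' u w' \<longrightarrow> w = w'"
proof (rule ccontr)
  assume "\<not> ?thesis"
  then obtain u1 w1 w1' where bad1: "rel h u1 w1" "rel h' u1 w1'" "w1 \<noteq> w1'" by blast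
  obtain D where D: "\<not> ur D" "\<forall>u. mem u D \<longleftrightarrow> mem u W \<and> (\<exists>w w'. rel h u w \<and> rel h' u w' \<and> w \<noteq> w')"
    using sep2[of "h ## h' ## undefined" "DEx (DEx (DConj (drel 3 2 1) (DConj (drel 4 2 0) (DNeg (DEq 1 0)))))"
      "\<lambda>u. \<exists>w w'. rel h u w \<and> rel h' u w' \<and> w \<noteq> w'" W] by (simp add: numeral_eq_Suc, blast?)
  have "mem u1 D" using D bad1 iso_c1[OF h] by blast
  then obtain u0 where u0: "mem u0 D" "\<forall>u. mem u D \<longrightarrow> \<not> rel r u u0" using wo_least[OF wr, of D] D by blast
  then obtain v v' where vv: "rel h u0 v" "rel h' u0 v'" "v \<noteq> v'" using D by blast
  have minim: "\<forall>u. mem u W \<and> rel r u u0 \<longrightarrow> (\<forall>w w'. rel h u w \<and> rel h' u w' \<longrightarrow> w = w')"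
    using u0 D by blast
  have vS: "mem v S" "mem v' S" using iso_c1[OF h] iso_c1[OF h'] vv by blast+
  then consider "rel R v v'" | "rel R v' v" using wo_total[OF wR] vv(3) by blast
  then show False
  proof cases
    case 1 then show False using iso_agree_aux[OF wr wR h h' x y' vv(1,2) 1 minim] by blast
  next
    case 2
    have minim': "\<forall>u. mem u W \<and> rel r u u0 \<longrightarrow> (\<forall>w w'. rel h' u w \<and> rel h u w' \<longrightarrow> w = w')"
      using minim by metis
    show False using iso_agree_aux[OF wr wR h' h x y vv(2,1) 2 minim'] by blast
  qed
qed

lemma iso_uniq_aux:
  assumes wr: "wo r W" and wR: "wo R S" and h: "isom h W r x S R y" and h': "isom h' W r x S R y'"
    and x: "mem x W" and y: "mem y S" and y': "mem y' S"
    and agree: "\<forall>u w w'. rel h u w \<and> rel h' u w' \<longrightarrow> w = w'"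
    and lt: "rel R y y'"
  shows False
proof -
  obtain u where u: "rel h' u y" using iso_c3[OF h' y lt] by blast
  then have "mem u W" "rel r u x" using iso_c1[OF h'] by blast+
  then obtain w where w: "rel h u w" using iso_c2[OF h] by blast
  then have "w = y" using agree u by blast
  then have "rel R y y" using iso_c1[OF h] w by blast
  then show False using wo_irr[OF wR y] by blast
qed

lemma iso_uniq:
  assumes wr: "wo r W" and wR: "wo R S" and h: "isom h W r x S R y" and h': "isom h' W r x S R y'"
    and x: "mem x W" and y: "mem y S" and y': "mem y' S"
  shows "y = y'"
proof -
  have ag: "\<forall>u w w'. rel h u w \<and> rel h' u w' \<longrightarrow> w = w'" using iso_agree[OF assms] .
  have ag': "\<forall>u w w'. rel h' u w \<and> rel h u w' \<longrightarrow> w = w'" using ag by metis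
  have "\<not> rel R y y'" using iso_uniq_aux[OF wr wR h h' x y y' ag] by blast
  moreover have "\<not> rel R y' y" using iso_uniq_aux[OF wr wR h' h x y' y ag'] by blast
  ultimately show ?thesis using wo_total[OF wR y y'] by blast
qed

lemma iso_restrict:
  assumes wr: "wo r W" and wR: "wo R S" and h: "isom h W r x S R y" and x: "mem x W" and y: "mem y S"
    and hx: "rel h x' y'"
  shows "\<exists>h'. isom h' W r x' S R y'"
proof -
  have x': "mem x' W" "rel r x' x" "mem y' S" "rel R y' y" using iso_c1[OF h hx] by blast+
  obtain g where g: "\<forall>a b. rel g a b \<longleftrightarrow> mem a W \<and> mem b S \<and> (rel h a b \<and> rel r a x')"
    using mk_rel2[of W S "h ## r ## x' ## undefined" "DConj (drel 5 1 0) (drel 6 1 7)"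
        "\<lambda>a b. rel h a b \<and> rel r a x'"] by (simp add: numeral_eq_Suc, blast?)
  have "isom g W r x' S R y'"
  proof (rule iso_intro)
    fix u v assume "rel g u v"
    then have uv: "mem u W" "mem v S" "rel h u v" "rel r u x'" using g by blast+
    have "rel R v y'" using iso_c4[OF h uv(3) hx] uv(4) by blast
    then show "mem u W \<and> rel r u x' \<and> mem v S \<and> rel R v y'" using uv by blast
  next
    fix u assume u0: "mem u W" "rel r u x'"
    then have u: "mem u W \<and> rel r u x'" by blast
    then have "rel r u x" using wo_trans[OF wr _ x'(1) x] x'(2) by blast
    then obtain v where "rel h u v" using iso_c2[OF h] u by blast
    then show "\<exists>v. rel g u v" using g u iso_c1[OF h] by blast
  next
    fix v assume v0: "mem v S" "rel R v y'"
    then have v: "mem v S \<and> rel R v y'" by blast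
    then have "rel R v y" using wo_trans[OF wR _ x'(3) y] x'(4) by blast
    then obtain u where u: "rel h u v" using iso_c3[OF h] v by blast
    then have "rel r u x'" using iso_c4[OF h u hx] v by blast
    then show "\<exists>u. rel g u v" using g u iso_c1[OF h] by blast
  next
    fix u v u' v' assume "rel g u v" "rel g u' v'"
    then show "rel r u u' \<longleftrightarrow> rel R v v'" using g iso_c4[OF h] by blast
  qed
  then show ?thesis by blast
qed

end


context M begin

abbreviation "injm \<equiv> inj_in mem ur"

lemma inj_intro:
  "(\<forall>p. mem p g \<longrightarrow> (\<exists>u v. opair u v p \<and> mem u X \<and> mem v Y)) \<Longrightarrow>
   (\<And>u. mem u X \<Longrightarrow> \<exists>v. rel g u v) \<Longrightarrow>
   (\<And>u v u' v'. rel g u v \<Longrightarrow> rel g u' v' \<Longrightarrow> u = u' \<longleftrightarrow> v = v') \<Longrightarrow> injm g X Y"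
  unfolding inj_in_def by blast

lemma compare:
  assumes wr: "wo r W" and wR: "wo R S"
  shows "(\<exists>g. injm g W S) \<or> (\<exists>x I g. mem x W \<and> \<not> ur I \<and> (\<forall>u. mem u I \<longleftrightarrow> mem u W \<and> rel r u x) \<and> injm g S I)"
proof -
  obtain F where F: "\<not> ur F" "\<forall>p. mem p F \<longrightarrow> (\<exists>x y. opair x y p \<and> mem x W \<and> mem y S)"
    "\<forall>a b. rel F a b \<longleftrightarrow> mem a W \<and> mem b S \<and> (\<exists>h. isom h W r a S R b)"
    using mk_rel2[of W S "r ## R ## undefined" "DEx (diso 0 4 6 2 5 7 1)" "\<lambda>a b. \<exists>h. isom h W r a S R b"]
    by (simp add: numeral_eq_Suc, blast?)
  have Ff: "y = y'" if hyp: "rel F x y" "rel F x y'" for x y y'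
  proof -
    obtain h h' where "isom h W r x S R y" "isom h' W r x S R y'" "mem x W" "mem y S" "mem y' S" using F(3) hyp by blast
    then show ?thesis using iso_uniq[OF wr wR] by blast
  qed
  have Fi: "x = x'" if hyp: "rel F x y" "rel F x' y" for x x' y
  proof -
    obtain h h' where "isom h W r x S R y" "isom h' W r x' S R y" "mem x W" "mem x' W" "mem y S" using F(3) hyp by blast
    moreover then obtain k k' where "isom k S R y W r x" "isom k' S R y W r x'" using iso_conv_ex by metis
    ultimately show ?thesis using iso_uniq[OF wR wr] by blast
  qed
  have Fd: "rel F x' y'" if hyp: "isom h W r x S R y" "rel h x' y'" "mem x W" "mem y S" for h x y x' y'
  proof -
    obtain h' where "isom h' W r x' S R y'" using iso_restrict[OF wr wR hyp(1,3,4,2)] by blast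
    then show ?thesis using F(3) iso_c1[OF hyp(1,2)] by blast
  qed
  have F4a: "rel R y' y" if hyp: "rel F x y" "rel F x' y'" "rel r x' x" for x y x' y'
  proof -
    obtain h where h: "isom h W r x S R y" "mem x W" "mem y S" "mem x' W" using F(3) hyp by blast
    obtain v where v: "rel h x' v" using iso_c2[OF h(1) h(4) hyp(3)] by blast
    have "rel F x' v" using Fd[OF h(1) v h(2,3)] .
    then have "v = y'" using Ff hyp(2) by blast
    then show ?thesis using iso_c1[OF h(1) v] by blast
  qed
  have F4b: "rel r x' x" if hyp: "rel F x y" "rel F x' y'" "rel R y' y" for x y x' y'
  proof -
    obtain h where h: "isom h W r x S R y" "mem x W" "mem y S" "mem y' S" using F(3) hyp by blast
    obtain u where u: "rel h u y'" using iso_c3[OF h(1) h(4) hyp(3)] by blast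
    have "rel F u y'" using Fd[OF h(1) u h(2,3)] .
    then have "u = x'" using Fi hyp(2) by blast
    then show ?thesis using iso_c1[OF h(1) u] by blast
  qed
  have domd: "\<exists>y'. rel F x' y'" if hyp: "rel F x y" "mem x' W" "rel r x' x" for x y x'
  proof -
    obtain h where h: "isom h W r x S R y" "mem x W" "mem y S" using F(3) hyp by blast
    obtain v where v: "rel h x' v" using iso_c2[OF h(1) hyp(2,3)] by blast
    show ?thesis using Fd[OF h(1) v h(2,3)] by blast
  qed
  have rand: "\<exists>x'. rel F x' y'" if hyp: "rel F x y" "mem y' S" "rel R y' y" for x y y'
  proof -
    obtain h where h: "isom h W r x S R y" "mem x W" "mem y S" using F(3) hyp by blast
    obtain u where u: "rel h u y'" using iso_c3[OF h(1) hyp(2,3)] by blast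
    show ?thesis using Fd[OF h(1) u h(2,3)] by blast
  qed
  have injF: "u = u' \<longleftrightarrow> v = v'" if hyp: "rel F u v" "rel F u' v'" for u v u' v'
    using Ff Fi hyp by blast
  obtain N where N: "\<not> ur N" "\<forall>x. mem x N \<longleftrightarrow> mem x W \<and> \<not> (\<exists>y. rel F x y)"
    using sep2[of "F ## undefined" "DNeg (DEx (drel 2 1 0))" "\<lambda>x. \<not> (\<exists>y. rel F x y)" W]
    by (simp add: numeral_eq_Suc, blast?)
  obtain Mr where Mr: "\<not> ur Mr" "\<forall>y. mem y Mr \<longleftrightarrow> mem y S \<and> \<not> (\<exists>x. rel F x y)"
    using sep2[of "F ## undefined" "DNeg (DEx (drel 2 0 1))" "\<lambda>y. \<not> (\<exists>x. rel F x y)" S]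
    by (simp add: numeral_eq_Suc, blast?)
  show ?thesis
  proof (cases "\<exists>x. mem x N")
    case False
    have "injm F W S"
    proof (rule inj_intro)
      show "\<forall>p. mem p F \<longrightarrow> (\<exists>u v. opair u v p \<and> mem u W \<and> mem v S)" using F(2) by blast
      show "\<And>u. mem u W \<Longrightarrow> \<exists>v. rel F u v" using False N by blast
      show "\<And>u v u' v'. rel F u v \<Longrightarrow> rel F u' v' \<Longrightarrow> u = u' \<longleftrightarrow> v = v'" using injF by blast
    qed
    then show ?thesis by blast
  next
    case True
    then obtain x1 where "mem x1 N" by blast
    then obtain xs where xs: "mem xs N" "\<forall>u. mem u N \<longrightarrow> \<not> rel r u xs" using wo_least[OF wr, of N] N by blast
    have xsW: "mem xs W" using xs N by blast
    have below: "\<exists>v. rel F u v" if hyp: "mem u W" "rel r u xs" for u using xs N hyp by blast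
    have domlt: "rel r u xs" if hyp: "rel F u v" for u v
    proof -
      have uW: "mem u W" using F(3) hyp by blast
      have "u \<noteq> xs" using xs N hyp by blast
      moreover have "\<not> rel r xs u" using domd[OF hyp xsW] xs N by blast
      ultimately show ?thesis using wo_total[OF wr uW xsW] by blast
    qed
    show ?thesis
    proof (cases "\<exists>y. mem y Mr")
      case True
      then obtain y1 where "mem y1 Mr" by blast
      then obtain ys where ys: "mem ys Mr" "\<forall>u. mem u Mr \<longrightarrow> \<not> rel R u ys" using wo_least[OF wR, of Mr] Mr by blast
      have ysS: "mem ys S" using ys Mr by blast
      have belowy: "\<exists>u. rel F u v" if hyp: "mem v S" "rel R v ys" for v using ys Mr hyp by blast
      have ranlt: "rel R v ys" if hyp: "rel F u v" for u v
      proof -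
        have vS: "mem v S" using F(3) hyp by blast
        have "v \<noteq> ys" using ys Mr hyp by blast
        moreover have "\<not> rel R ys v" using rand[OF hyp ysS] ys Mr by blast
        ultimately show ?thesis using wo_total[OF wR vS ysS] by blast
      qed
      have "isom F W r xs S R ys"
      proof (rule iso_intro)
        show "\<And>u v. rel F u v \<Longrightarrow> mem u W \<and> rel r u xs \<and> mem v S \<and> rel R v ys"
          using F(3) domlt ranlt by blast
        show "\<And>u. mem u W \<Longrightarrow> rel r u xs \<Longrightarrow> \<exists>v. rel F u v" using below by blast
        show "\<And>v. mem v S \<Longrightarrow> rel R v ys \<Longrightarrow> \<exists>u. rel F u v" using belowy by blast
        show "\<And>u v u' v'. rel F u v \<Longrightarrow> rel F u' v' \<Longrightarrow> rel r u u' \<longleftrightarrow> rel R v v'"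
          using F4a F4b by blast
      qed
      then have "rel F xs ys" using F(3) xsW ysS by blast
      then show ?thesis using xs N by blast
    next
      case False
      obtain I where I: "\<not> ur I" "\<forall>u. mem u I \<longleftrightarrow> mem u W \<and> rel r u xs" using sep_seg by blast
      obtain g where g: "\<not> ur g" "\<forall>p. mem p g \<longrightarrow> (\<exists>x y. opair x y p \<and> mem x S \<and> mem y I)"
        "\<forall>a b. rel g a b \<longleftrightarrow> mem a S \<and> mem b I \<and> rel F b a"
        using mk_rel2[of S I "F ## undefined" "drel 5 0 1" "\<lambda>a b. rel F b a"]
        by (simp add: numeral_eq_Suc, blast?)
      have "injm g S I"
      proof (rule inj_intro)
        show "\<forall>p. mem p g \<longrightarrow> (\<exists>u v. opair u v p \<and> mem u S \<and> mem v I)" using g(2) by blast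
        fix u assume u: "mem u S"
        then obtain v where v: "rel F v u" using False Mr by blast
        then have "mem v I" using I domlt F(3) by blast
        then show "\<exists>v. rel g u v" using g(3) u v by blast
      next
        fix u v u' v' assume "rel g u v" "rel g u' v'"
        then show "u = u' \<longleftrightarrow> v = v'" using g(3) injF by blast
      qed
      then show ?thesis using xsW I by blast
    qed
  qed
qed

end


definition durset where "durset i = DConj (DNeg (DUr i)) (DAll (DImp (DMem 0 (Suc i)) (DUr 0)))"
lemma dsat_urset[simp]: "dsat mem ur e (durset i) = urset_in mem ur (e i)"
  unfolding durset_def urset_in_def by simp

context M begin

lemma inj_members: "injm g X Y \<Longrightarrow> rel g u v \<Longrightarrow> mem u X \<and> mem v Y"
  unfolding inj_in_def using members_rel by blast

lemma inj_compose: assumes g: "injm g X Y" and g': "injm g' Y Z" shows "\<exists>h. injm h X Z"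
proof -
  obtain h where h: "\<not> ur h" "\<forall>p. mem p h \<longrightarrow> (\<exists>x y. opair x y p \<and> mem x X \<and> mem y Z)"
    "\<forall>a c. rel h a c \<longleftrightarrow> mem a X \<and> mem c Z \<and> (\<exists>b. rel g a b \<and> rel g' b c)"
    using mk_rel2[of X Z "g ## g' ## undefined" "DEx (DConj (drel 6 2 0) (drel 7 0 1))"
        "\<lambda>a c. \<exists>b. rel g a b \<and> rel g' b c"] by (simp add: numeral_eq_Suc, blast?)
  have gi: "u = u' \<longleftrightarrow> v = v'" if "rel g u v" "rel g u' v'" for u v u' v' using g that unfolding inj_in_def by blast
  have gi': "u = u' \<longleftrightarrow> v = v'" if "rel g' u v" "rel g' u' v'" for u v u' v' using g' that unfolding inj_in_def by blast
  have "injm h X Z"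
  proof (rule inj_intro)
    show "\<forall>p. mem p h \<longrightarrow> (\<exists>u v. opair u v p \<and> mem u X \<and> mem v Z)" using h(2) by blast
    fix a assume a: "mem a X"
    then obtain b where b: "rel g a b" using g unfolding inj_in_def by blast
    then have "mem b Y" using inj_members[OF g] by blast
    then obtain c where c: "rel g' b c" using g' unfolding inj_in_def by blast
    then have "mem c Z" using inj_members[OF g'] by blast
    then show "\<exists>c. rel h a c" using h(3) a b c by blast
  next
    fix u v u' v' assume "rel h u v" "rel h u' v'"
    then obtain b b' where "rel g u b" "rel g' b v" "rel g u' b'" "rel g' b' v'" using h(3) by blast
    then show "u = u' \<longleftrightarrow> v = v'" using gi gi' by blast
  qed
  then show ?thesis by blast
qed

definition Pp where
  "Pp A \<longleftrightarrow> (\<forall>S. urset S \<and> (\<forall>u. mem u S \<longrightarrow> \<not> mem u A) \<longrightarrow>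
     (\<exists>E g. urset E \<and> (\<forall>u. mem u E \<longrightarrow> \<not> mem u A \<and> \<not> mem u S) \<and> injm g S E))"

definition bound where
  "bound A X \<longleftrightarrow> (\<forall>T g. urset T \<and> (\<forall>u. mem u T \<longrightarrow> \<not> mem u A) \<longrightarrow> \<not> injm g X T)"

lemma union_urset: "urset X \<Longrightarrow> urset Y \<Longrightarrow> \<exists>U. urset U \<and> (\<forall>w. mem w U \<longleftrightarrow> mem w X \<or> mem w Y)"
  using union2_ex unfolding urset_in_def by metis

lemma exP: "\<exists>A. urset A \<and> Pp A"
proof -
  obtain e0 where e0: "\<not> ur e0" "\<forall>z. \<not> mem z e0" using empty_ex by blast
  have ue0: "urset e0" using e0 unfolding urset_in_def by blast
  show ?thesis
  proof (cases "Pp e0")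
    case True then show ?thesis using ue0 by blast
  next
    case False
    then obtain S1 where S1: "urset S1"
      "\<not> (\<exists>E g. urset E \<and> (\<forall>u. mem u E \<longrightarrow> \<not> mem u e0 \<and> \<not> mem u S1) \<and> injm g S1 E)"
      unfolding Pp_def by blast
    have bS1: "bound S1 S1" unfolding bound_def using S1(2) e0 by blast
    obtain r where r: "wo r S1" using wo_ex S1(1) unfolding urset_in_def by blast
    define good where "good x \<longleftrightarrow> (\<exists>I. (\<forall>u. mem u I \<longleftrightarrow> mem u S1 \<and> rel r u x) \<and> (\<exists>A. urset A \<and> bound A I))" for x
    obtain G where G: "\<not> ur G" "\<forall>x. mem x G \<longleftrightarrow> mem x S1 \<and> good x"
      using sep2[of "S1 ## r ## undefined"
         "DEx (DConj (DAll (DIff (DMem 0 1) (DConj (DMem 0 3) (drel 4 0 2))))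
            (DEx (DConj (durset 0) (DAll (DAll (DImp (DConj (durset 1) (DAll (DImp (DMem 0 2) (DNeg (DMem 0 3)))))
                (DNeg (dinj 0 3 1))))))))"
         good S1]
      unfolding good_def bound_def by (simp add: numeral_eq_Suc, blast?)
    obtain A0 W0 where A0: "urset A0" "bound A0 W0" "\<forall>x. mem x W0 \<longrightarrow> \<not> good x"
      "\<forall>x. mem x W0 \<longrightarrow> mem x S1" "\<forall>x u. mem x W0 \<and> mem u S1 \<and> rel r u x \<longrightarrow> mem u W0"
    proof (cases "\<exists>x. mem x G")
      case True
      then obtain x1 where "mem x1 G" by blast
      then obtain x0 where x0: "mem x0 G" "\<forall>u. mem u G \<longrightarrow> \<not> rel r u x0"
        using wo_least[OF r, of G] G by blast
      then obtain I A where IA: "\<forall>u. mem u I \<longleftrightarrow> mem u S1 \<and> rel r u x0" "urset A" "bound A I"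
        using G unfolding good_def by blast
      have x0S: "mem x0 S1" using x0 G by blast
      have "\<forall>x. mem x I \<longrightarrow> \<not> good x" using IA(1) x0 G by blast
      moreover have "\<forall>x u. mem x I \<and> mem u S1 \<and> rel r u x \<longrightarrow> mem u I"
        using IA(1) wo_trans[OF r _ _ x0S] by blast
      ultimately show ?thesis using that[of A I] IA by blast
    next
      case False
      then show ?thesis using that[of S1 S1] S1(1) bS1 G by blast
    qed
    have "Pp A0" unfolding Pp_def
    proof (intro allI impI, rule ccontr)
      fix S assume S: "urset S \<and> (\<forall>u. mem u S \<longrightarrow> \<not> mem u A0)"
        and noE: "\<not> (\<exists>E g. urset E \<and> (\<forall>u. mem u E \<longrightarrow> \<not> mem u A0 \<and> \<not> mem u S) \<and> injm g S E)"
      obtain A1 where A1: "urset A1" "\<forall>w. mem w A1 \<longleftrightarrow> mem w A0 \<or> mem w S" using union_urset A0(1) S by blast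
      have rW: "wo r W0" using wo_sub[OF r] A0(4) by blast
      obtain R where R: "wo R S" using wo_ex S unfolding urset_in_def by blast
      from compare[OF rW R] show False
      proof
        assume "\<exists>g. injm g W0 S"
        then show False using A0(2) S unfolding bound_def by blast
      next
        assume "\<exists>x I g. mem x W0 \<and> \<not> ur I \<and> (\<forall>u. mem u I \<longleftrightarrow> mem u W0 \<and> rel r u x) \<and> injm g S I"
        then obtain x I g where xI: "mem x W0" "\<forall>u. mem u I \<longleftrightarrow> mem u W0 \<and> rel r u x" "injm g S I" by blast
        have I': "\<forall>u. mem u I \<longleftrightarrow> mem u S1 \<and> rel r u x" using xI(1,2) A0(4,5) by blast
        have "bound A1 I" unfolding bound_def
        proof (intro allI impI notI)
          fix T g' assume T: "urset T \<and> (\<forall>u. mem u T \<longrightarrow> \<not> mem u A1)" and g': "injm g' I T"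
          obtain h where "injm h S T" using inj_compose[OF xI(3) g'] by blast
          then show False using noE T A1 by blast
        qed
        then have "good x" unfolding good_def using I' A1(1) by blast
        then show False using A0(3) xI(1) by blast
      qed
    qed
    then show ?thesis using A0(1) by blast
  qed
qed

end


context M begin

lemma H1:
  assumes uA: "urset A" and PA: "Pp A"
  shows "homogeneous_over mem ur A"
  unfolding homogeneous_over_def
proof (intro allI impI, elim conjE)
  fix B C
  assume B: "urset B" and C: "urset C" and disj: "\<forall>u. mem u B \<or> mem u C \<longrightarrow> \<not> mem u A"
    and eq: "equinum_in mem ur B C"
  obtain f where f: "bij_in mem ur f B C" using eq unfolding equinum_in_def by blast
  have frel: "rel f u v \<Longrightarrow> mem u B \<and> mem v C" for u v using bij_rel[OF f] .
  have ftot: "mem u B \<Longrightarrow> \<exists>!v. rel f u v" for u using f unfolding bij_in_def by blast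
  have fsur: "mem v C \<Longrightarrow> \<exists>!u. rel f u v" for v using f unfolding bij_in_def by blast
  have ffun: "rel f u v \<Longrightarrow> rel f u v' \<Longrightarrow> v = v'" for u v v' using ftot frel by blast
  have finj: "rel f u v \<Longrightarrow> rel f u' v \<Longrightarrow> u = u'" for u u' v using fsur frel by blast
  obtain S where S: "urset S" "\<forall>w. mem w S \<longleftrightarrow> mem w B \<or> mem w C" using union_urset B C by blast
  have "\<forall>u. mem u S \<longrightarrow> \<not> mem u A" using S disj by blast
  then obtain E g where E: "urset E" "\<forall>u. mem u E \<longrightarrow> \<not> mem u A \<and> \<not> mem u S" and g: "injm g S E"
    using PA S(1) unfolding Pp_def by blast
  have grel: "rel g u v \<Longrightarrow> mem u S \<and> mem v E" for u v using inj_members[OF g] .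
  have gtot: "mem u S \<Longrightarrow> \<exists>v. rel g u v" for u using g unfolding inj_in_def by blast
  have ginj: "rel g u v \<Longrightarrow> rel g u' v' \<Longrightarrow> u = u' \<longleftrightarrow> v = v'" for u v u' v' using g unfolding inj_in_def by blast
  have BE: "mem u B \<Longrightarrow> \<not> mem u E" for u using E S by blast
  have CE: "mem u C \<Longrightarrow> \<not> mem u E" for u using E S by blast
  obtain U where U: "urset U" "\<forall>w. mem w U \<longleftrightarrow> mem w S \<or> mem w E" using union_urset S(1) E(1) by blast
  obtain W where W: "\<not> ur W" "\<forall>z. mem z W \<longleftrightarrow> mem z U \<and> (mem z B \<or> mem z C \<or> (\<exists>c. mem c C \<and> rel g c z))"
    using sep2[of "B ## C ## g ## undefined" "DOr (DMem 0 1) (DOr (DMem 0 2) (DEx (DConj (DMem 0 3) (drel 4 0 1))))"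
      "\<lambda>z. mem z B \<or> mem z C \<or> (\<exists>c. mem c C \<and> rel g c z)" U] by (simp add: numeral_eq_Suc, blast?)
  have Wiff: "mem z W \<longleftrightarrow> mem z B \<or> mem z C \<or> (\<exists>c. mem c C \<and> rel g c z)" for z
    using W U S grel by blast
  define Q where "Q x y \<longleftrightarrow> (mem x B \<and> rel f x y) \<or> (mem x C \<and> \<not> mem x B \<and> rel g x y) \<or>
      (\<exists>c b. mem c C \<and> rel g c x \<and> rel f b c \<and> ((mem b C \<and> rel g b y) \<or> (\<not> mem b C \<and> y = b)))" for x y
  define phi where "phi = DOr (DConj (DMem 1 5) (drel 7 1 0)) (DOr (DConj (DMem 1 6) (DConj (DNeg (DMem 1 5)) (drel 8 1 0)))
        (DEx (DEx (DConj (DMem 1 8) (DConj (drel 10 1 3) (DConj (drel 9 0 1)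
           (DOr (DConj (DMem 0 8) (drel 10 0 2)) (DConj (DNeg (DMem 0 8)) (DEq 2 0)))))))))"
  have phiQ: "\<forall>x y q. dsat mem ur (y ## x ## q ## W ## W ## B ## C ## f ## g ## undefined) phi = Q x y"
    unfolding phi_def Q_def by (simp add: numeral_eq_Suc)
  obtain p where p: "\<not> ur p" "\<forall>q. mem q p \<longrightarrow> (\<exists>x y. opair x y q \<and> mem x W \<and> mem y W)"
    "\<forall>a b. rel p a b \<longleftrightarrow> mem a W \<and> mem b W \<and> Q a b"
    using mk_rel2[OF phiQ] by blast
  have QB: "mem x B \<Longrightarrow> Q x y \<longleftrightarrow> rel f x y" for x y
    unfolding Q_def using BE grel by blast
  have fwd: "\<exists>!v. mem v W \<and> Q u v" if u: "mem u W" for u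
  proof (cases "mem u B")
    case True
    then obtain v where v: "rel f u v" using ftot by blast
    then have "mem v W" using frel Wiff by blast
    then show ?thesis using v QB[OF True] ffun by blast
  next
    case uB: False
    show ?thesis
    proof (cases "mem u C")
      case True
      then obtain v where v: "rel g u v" using gtot S by blast
      then have "mem v W" using Wiff True by blast
      moreover have "Q u v" using True uB v unfolding Q_def by blast
      moreover have "Q u v' \<Longrightarrow> v' = v" for v'
        unfolding Q_def using uB True CE grel ginj v by blast
      ultimately show ?thesis by blast
    next
      case uC: False
      then obtain c where c: "mem c C" "rel g c u" using u Wiff uB by blast
      then obtain b where b: "rel f b c" using fsur by blast
      have bB: "mem b B" using frel b by blast
      have uniq: "v' = v" if "Q u v'" "Q u v" for v' v
      proof -
        from that(1) obtain c' b' where cb': "mem c' C" "rel g c' u" "rel f b' c'"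
            "(mem b' C \<and> rel g b' v') \<or> (\<not> mem b' C \<and> v' = b')"
          unfolding Q_def using uB uC by blast
        from that(2) obtain c'' b'' where cb'': "mem c'' C" "rel g c'' u" "rel f b'' c''"
            "(mem b'' C \<and> rel g b'' v) \<or> (\<not> mem b'' C \<and> v = b'')"
          unfolding Q_def using uB uC by blast
        have "c' = c''" using ginj cb'(2) cb''(2) by blast
        then have "b' = b''" using finj cb'(3) cb''(3) by blast
        then show ?thesis using cb'(4) cb''(4) ginj by blast
      qed
      show ?thesis
      proof (cases "mem b C")
        case True
        then obtain v where v: "rel g b v" using gtot S by blast
        have "Q u v" unfolding Q_def using c b True v by blast
        moreover have "mem v W" using Wiff True v by blast
        ultimately show ?thesis using uniq by blast
      next
        case False
        have "Q u b" unfolding Q_def using c b False by blast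
        moreover have "mem b W" using Wiff bB by blast
        ultimately show ?thesis using uniq by blast
      qed
    qed
  qed
  have bwd: "\<exists>!u. mem u W \<and> Q u v" if v: "mem v W" for v
  proof (cases "mem v C")
    case vC: True
    then obtain u where u: "rel f u v" using fsur by blast
    then have uB: "mem u B" using frel by blast
    have "mem u W" using Wiff uB by blast
    moreover have "Q u v" using QB uB u by blast
    moreover have "Q u' v \<Longrightarrow> u' = u" for u'
      unfolding Q_def using vC CE grel finj u by blast
    ultimately show ?thesis by blast
  next
    case vC: False
    show ?thesis
    proof (cases "mem v B")
      case vB: True
      then obtain c where c: "rel f v c" using ftot by blast
      then have cC: "mem c C" using frel by blast
      then obtain x where x: "rel g c x" using gtot S by blast
      have "Q x v" unfolding Q_def using cC x c vC by blast
      moreover have "mem x W" using Wiff cC x by blast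
      moreover have "Q u' v \<Longrightarrow> u' = x" for u'
      proof -
        assume "Q u' v"
        then obtain c' where c': "rel g c' u'" "rel f v c'"
          unfolding Q_def using vC vB BE grel frel by blast
        then have "c' = c" using ffun c by blast
        then show "u' = x" using ginj c' x by blast
      qed
      ultimately show ?thesis by blast
    next
      case vB: False
      then obtain c0 where c0: "mem c0 C" "rel g c0 v" using v Wiff vC by blast
      show ?thesis
      proof (cases "mem c0 B")
        case False
        have "Q c0 v" unfolding Q_def using c0 False by blast
        moreover have "mem c0 W" using Wiff c0 by blast
        moreover have "Q u' v \<Longrightarrow> u' = c0" for u'
          unfolding Q_def using vC vB ginj c0 frel False by blast
        ultimately show ?thesis by blast
      next
        case True
        then obtain c where c: "rel f c0 c" using ftot by blast
        then have cC: "mem c C" using frel by blast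
        then obtain x where x: "rel g c x" using gtot S by blast
        have "Q x v" unfolding Q_def using cC x c c0 by blast
        moreover have "mem x W" using Wiff cC x by blast
        moreover have "Q u' v \<Longrightarrow> u' = x" for u'
        proof -
          assume q: "Q u' v"
          have n1: "\<not> (mem u' B \<and> rel f u' v)" using frel vC by blast
          have n2: "\<not> (mem u' C \<and> \<not> mem u' B \<and> rel g u' v)" using ginj c0 True by blast
          from q n1 n2 obtain c' b' where cb': "mem c' C" "rel g c' u'" "rel f b' c'"
              "(mem b' C \<and> rel g b' v) \<or> (\<not> mem b' C \<and> v = b')"
            unfolding Q_def by blast
          have "b' = c0" using cb'(4) ginj c0 frel cb'(3) vB by blast
          then have "c' = c" using ffun cb'(3) c by blast
          then show "u' = x" using ginj cb'(2) x by blast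
        qed
        ultimately show ?thesis by blast
      qed
    qed
  qed
  have pbij: "bij_in mem ur p W W"
    unfolding bij_in_def
  proof (intro conjI allI impI)
    show "\<And>q. mem q p \<Longrightarrow> \<exists>u v. opair u v q \<and> mem u W \<and> mem v W" using p by blast
  next
    fix u assume u: "mem u W"
    show "\<exists>!v. rel p u v" using fwd[OF u] p(3) u by blast
  next
    fix v assume v: "mem v W"
    show "\<exists>!u. rel p u v" using bwd[OF v] p(3) v by blast
  qed
  have BW: "mem b B \<Longrightarrow> mem b W" for b using Wiff by blast
  have "urset W" using W U unfolding urset_in_def by blast
  moreover have "\<forall>a. mem a A \<longrightarrow> act_in mem ur p W a a"
    using W U S E disj unfolding act_in_def by blast
  moreover have "\<forall>c. mem c C \<longleftrightarrow> (\<exists>b. mem b B \<and> act_in mem ur p W b c)"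
  proof (intro allI iffI)
    fix c assume c: "mem c C"
    then obtain b where "rel f b c" using fsur by blast
    then have "mem b B" "rel p b c" using p(3) frel BW Wiff QB by blast+
    then show "\<exists>b. mem b B \<and> act_in mem ur p W b c" using BW unfolding act_in_def by blast
  next
    fix c assume "\<exists>b. mem b B \<and> act_in mem ur p W b c"
    then obtain b where "mem b B" "act_in mem ur p W b c" by blast
    then have "rel f b c" using BW p(3) QB unfolding act_in_def by blast
    then show "mem c C" using frel by blast
  qed
  ultimately show "\<exists>D p. urset D \<and> bij_in mem ur p D D \<and> (\<forall>a. mem a A \<longrightarrow> act_in mem ur p D a a) \<and>
           (\<forall>c. mem c C = (\<exists>b. mem b B \<and> act_in mem ur p D b c))" using pbij by blast
qed

end

theorem mainTheorem2:
  fixes mem :: "'a \<Rightarrow> 'a \<Rightarrow> bool" and ur :: "'a \<Rightarrow> bool"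
  assumes "ZFCU_R mem ur"
  shows "(\<exists>A. urset_in mem ur A \<and> homogeneous_over mem ur A)
       \<and> (\<forall>A A'. urset_in mem ur A \<and> urset_in mem ur A' \<and> (\<forall>x. mem x A \<longrightarrow> mem x A')
            \<and> homogeneous_over mem ur A \<longrightarrow> homogeneous_over mem ur A')
       \<and> (\<forall>A. urset_in mem ur A \<longrightarrow>
            (\<exists>A'. urset_in mem ur A' \<and> (\<forall>x. mem x A \<longrightarrow> mem x A') \<and> homogeneous_over mem ur A'))"
proof -
  interpret M mem ur by (rule M.intro) (rule assms)
  have 1: "\<exists>A. urset_in mem ur A \<and> homogeneous_over mem ur A" using exP H1 by blast
  have 2: "\<forall>A A'. urset_in mem ur A \<and> urset_in mem ur A' \<and> (\<forall>x. mem x A \<longrightarrow> mem x A')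
            \<and> homogeneous_over mem ur A \<longrightarrow> homogeneous_over mem ur A'" using part2 by blast
  have 3: "\<forall>A. urset_in mem ur A \<longrightarrow>
            (\<exists>A'. urset_in mem ur A' \<and> (\<forall>x. mem x A \<longrightarrow> mem x A') \<and> homogeneous_over mem ur A')"
  proof (intro allI impI)
    fix A assume A: "urset_in mem ur A"
    obtain A0 where A0: "urset_in mem ur A0" "homogeneous_over mem ur A0" using 1 by blast
    obtain A' where A': "urset_in mem ur A'" "\<forall>w. mem w A' \<longleftrightarrow> mem w A \<or> mem w A0"
      using union_urset[OF A A0(1)] by blast
    have "homogeneous_over mem ur A'" using part2[OF A0(1) A'(1) _ A0(2)] A'(2) by blast
    then show "\<exists>A'. urset_in mem ur A' \<and> (\<forall>x. mem x A \<longrightarrow> mem x A') \<and> homogeneous_over mem ur A'"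
      using A' by blast
  qed
  show ?thesis using 1 2 3 by blast
qed

end
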